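(* Assume $\overline{c}>p$. Then $\lim_{c\to p^+}V(x,c)=V(x,p)$ for every $x>0$.
   Context: Cramér–Lundberg model: the uncontrolled surplus is $X_t=x+pt-\sum_{i=1}^{N_t}U_i$, where $x\ge0$ is the initial surplus, $p>0$ the premium rate, $N_t$ a Poisson process with intensity $\beta>0$, and the claims $U_i$ are i.i.d. positive random variables, independent of $N$, with continuous distribution function $F$; the safety loading condition $p>\beta\mathbb{E}[U_1]$ holds. Standing assumption (A1): $F$ is globally Lipschitz, i.e. $0\le F(y)-F(x)\le K(y-x)$ for $x<y$, for some $K>0$. Let $(\mathcal{F}_t)$ be the completed filtration generated by $X$. Fix $\overline{c}>0$ and a discount rate $q>0$. For $x\ge0$, $c\in[0,\overline{c}]$, $\Pi_{x,c,\overline{c}}$ is the set of càdlàg, adapted, non-decreasing processes $C=(C_t)$ with $c\le C_t\le\overline{c}$ for all $t$. Controlled surplus $X^C_t=X_t-\int_0^tC_sds$ ($X_0=x$), ruin time $\tau=\inf\{t\ge0:X^C_t<0\}$, $J(x;C)=\mathbb{E}[\int_0^\tau e^{-qs}C_sds]$, $V(x,c)=\sup_{C\in\Pi_{x,c,\overline{c}}}J(x;C)$. Convention: only strategies are considered such that if $C_{t^-}=p$ and $X^C_t=0$ for some $t>0$ then $C_s=p$ for $s\ge t$ until ruin; and the only strategy considered in $\Pi_{0,p,\overline{c}}$ is to pay at rate $p$ until the first claim arrival (so $V(0,p)=p/(q+\beta)$). *)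

theory Defs
  imports "HOL-Probability.Probability"
begin

text \<open>Cramer-Lundberg model. The Poisson process N of intensity beta is built from
  i.i.d. exponential(beta) inter-arrival times E n; claims are U n.\<close>

definition arrival :: "(nat \<Rightarrow> 'a \<Rightarrow> real) \<Rightarrow> nat \<Rightarrow> 'a \<Rightarrow> real" where
  "arrival E n \<omega> = (\<Sum>i\<le>n. E i \<omega>)"

definition Npois :: "(nat \<Rightarrow> 'a \<Rightarrow> real) \<Rightarrow> real \<Rightarrow> 'a \<Rightarrow> nat" where
  "Npois E t \<omega> = card {n. arrival E n \<omega> \<le> t}"

definition surplus :: "(nat \<Rightarrow> 'a \<Rightarrow> real) \<Rightarrow> (nat \<Rightarrow> 'a \<Rightarrow> real) \<Rightarrow> real \<Rightarrow> real \<Rightarrow> real \<Rightarrow> 'a \<Rightarrow> real" where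
  "surplus E U p x t \<omega> = x + p * t - (\<Sum>i<Npois E t \<omega>. U i \<omega>)"

definition cramer_lundberg ::
  "'a measure \<Rightarrow> real \<Rightarrow> real \<Rightarrow> (real \<Rightarrow> real) \<Rightarrow> (nat \<Rightarrow> 'a \<Rightarrow> real) \<Rightarrow> (nat \<Rightarrow> 'a \<Rightarrow> real) \<Rightarrow> bool" where
  "cramer_lundberg M \<beta> p F E U \<longleftrightarrow>
     prob_space M \<and> 0 < \<beta> \<and> 0 < p \<and>
     (\<forall>n. distributed M lborel (E n) (exponential_density \<beta>)) \<and>
     (\<forall>n. U n \<in> borel_measurable M) \<and>
     (\<forall>n. \<forall>y. measure M {\<omega> \<in> space M. U n \<omega> \<le> y} = F y) \<and>
     (\<forall>n. AE \<omega> in M. 0 < U n \<omega>) \<and>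
     prob_space.indep_vars M (\<lambda>_. borel) (\<lambda>i. case i of Inl n \<Rightarrow> E n | Inr n \<Rightarrow> U n) UNIV \<and>
     continuous_on UNIV F \<and>
     (\<exists>K>0. \<forall>a b. a < b \<longrightarrow> 0 \<le> F b - F a \<and> F b - F a \<le> K * (b - a)) \<and>
     ennreal \<beta> * (\<integral>\<^sup>+ \<omega>. ennreal (U 0 \<omega>) \<partial>M) < ennreal p"

definition nat_filt :: "'a measure \<Rightarrow> (real \<Rightarrow> 'a \<Rightarrow> real) \<Rightarrow> real \<Rightarrow> 'a set set" where
  "nat_filt M X t = sigma_sets (space M)
     {X s -` B \<inter> space M | s B. 0 \<le> s \<and> s \<le> t \<and> B \<in> sets borel}"

definition completed_filt :: "'a measure \<Rightarrow> (real \<Rightarrow> 'a \<Rightarrow> real) \<Rightarrow> real \<Rightarrow> 'a set set" where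
  "completed_filt M X t = {A. A \<subseteq> space M \<and>
     (\<exists>B\<in>nat_filt M X t. \<exists>N\<in>null_sets M. (A - B) \<union> (B - A) \<subseteq> N)}"

definition controlled :: "(nat \<Rightarrow> 'a \<Rightarrow> real) \<Rightarrow> (nat \<Rightarrow> 'a \<Rightarrow> real) \<Rightarrow> real \<Rightarrow> real
    \<Rightarrow> (real \<Rightarrow> 'a \<Rightarrow> real) \<Rightarrow> real \<Rightarrow> 'a \<Rightarrow> real" where
  "controlled E U p x C t \<omega> = surplus E U p x t \<omega> - integral {0..t} (\<lambda>s. C s \<omega>)"

text \<open>Ruin time (value \<infinity> if no ruin).\<close>
definition ruin_time :: "(nat \<Rightarrow> 'a \<Rightarrow> real) \<Rightarrow> (nat \<Rightarrow> 'a \<Rightarrow> real) \<Rightarrow> real \<Rightarrow> real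
    \<Rightarrow> (real \<Rightarrow> 'a \<Rightarrow> real) \<Rightarrow> 'a \<Rightarrow> ereal" where
  "ruin_time E U p x C \<omega> = Inf (ereal ` {t. 0 \<le> t \<and> controlled E U p x C t \<omega> < 0})"

definition admissible ::
  "'a measure \<Rightarrow> (nat \<Rightarrow> 'a \<Rightarrow> real) \<Rightarrow> (nat \<Rightarrow> 'a \<Rightarrow> real) \<Rightarrow> real \<Rightarrow> real \<Rightarrow> real \<Rightarrow> real
    \<Rightarrow> (real \<Rightarrow> 'a \<Rightarrow> real) set" where
  "admissible M E U p cbar x c =
     (if x = 0 \<and> c = p then {\<lambda>t \<omega>. p}
      else {C. (\<forall>t\<ge>0. \<forall>B\<in>sets borel.
                  C t -` B \<inter> space M \<in> completed_filt M (surplus E U p x) t) \<and>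
               (\<forall>\<omega>\<in>space M.
                  mono_on {0..} (\<lambda>t. C t \<omega>) \<and>
                  (\<forall>t\<ge>0. continuous (at_right t) (\<lambda>s. C s \<omega>)) \<and>
                  (\<forall>t>0. \<exists>l. ((\<lambda>s. C s \<omega>) \<longlongrightarrow> l) (at_left t)) \<and>
                  (\<forall>t\<ge>0. c \<le> C t \<omega> \<and> C t \<omega> \<le> cbar) \<and>
                  (\<forall>t>0. ((\<lambda>s. C s \<omega>) \<longlongrightarrow> p) (at_left t) \<and>
                         controlled E U p x C t \<omega> = 0 \<longrightarrow>
                         (\<forall>s. t \<le> s \<and> ereal s < ruin_time E U p x C \<omega> \<longrightarrow> C s \<omega> = p)))})"

definition Jval ::
  "'a measure \<Rightarrow> (nat \<Rightarrow> 'a \<Rightarrow> real) \<Rightarrow> (nat \<Rightarrow> 'a \<Rightarrow> real) \<Rightarrow> real \<Rightarrow> real \<Rightarrow> real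
    \<Rightarrow> (real \<Rightarrow> 'a \<Rightarrow> real) \<Rightarrow> real" where
  "Jval M E U p q x C = enn2real (\<integral>\<^sup>+ \<omega>. (\<integral>\<^sup>+ s.
      ennreal (indicator {s. 0 \<le> s \<and> ereal s < ruin_time E U p x C \<omega>} s * exp (- q * s) * C s \<omega>)
      \<partial>lborel) \<partial>M)"

definition Vval ::
  "'a measure \<Rightarrow> (nat \<Rightarrow> 'a \<Rightarrow> real) \<Rightarrow> (nat \<Rightarrow> 'a \<Rightarrow> real) \<Rightarrow> real \<Rightarrow> real \<Rightarrow> real
    \<Rightarrow> real \<Rightarrow> real \<Rightarrow> real" where
  "Vval M E U p q cbar x c = (SUP C \<in> admissible M E U p cbar x c. Jval M E U p q x C)"

end

theory Submission
  imports Defs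
begin
lemma intC:
  fixes Cp :: "real \<Rightarrow> real"
  assumes "mono_on {0..} Cp" "0 \<le> a"
  shows "Cp integrable_on {a..b}"
  by (rule integrable_on_mono_on) (use assms in \<open>auto intro: mono_on_subset\<close>)

lemma mono_max: "mono_on {0..} Cp \<Longrightarrow> mono_on {0..} (\<lambda>s. max (Cp s) (c::real))"
  unfolding mono_on_def by (meson max.mono order_refl)

lemma pathwise:
  fixes Cp :: "real \<Rightarrow> real" and N :: "real \<Rightarrow> nat" and u :: "nat \<Rightarrow> real"
  assumes mono: "mono_on {0..} Cp"
    and bnd: "\<And>t. 0 \<le> t \<Longrightarrow> p \<le> Cp t"
    and pc: "p < c" and dpos: "0 < \<delta>" and T: "0 \<le> T"
    and Nmono: "\<And>s t. 0 \<le> s \<Longrightarrow> s \<le> t \<Longrightarrow> t \<le> T + \<delta> \<Longrightarrow> N s \<le> N t"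
    and Nbd: "\<And>t. 0 \<le> t \<Longrightarrow> t \<le> T + \<delta> \<Longrightarrow> N t \<le> n0"
    and ubig: "\<And>i. i < n0 \<Longrightarrow> (c - p) * (T + \<delta>) \<le> u i"
    and Sgap: "\<And>n. 1 \<le> n \<Longrightarrow> n \<le> n0 \<Longrightarrow> \<not> (x - (c-p)*G < (\<Sum>i<n. u i) \<and> (\<Sum>i<n. u i) \<le> x)"
    and G: "G = (T+\<delta>) * (1 + 2*(T+\<delta>)/\<delta>)" and xG: "(c-p)*G \<le> x"
  defines "X \<equiv> \<lambda>t. x + p*t - (\<Sum>i<N t. u i) - integral {0..t} Cp"
    and "X' \<equiv> \<lambda>t. x + p*t - (\<Sum>i<N t. u i) - integral {0..t} (\<lambda>s. max (Cp s) c)"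
  shows "ereal T < Inf (ereal ` {t. 0 \<le> t \<and> X' t < 0}) \<or>
         Inf (ereal ` {t. 0 \<le> t \<and> X t < 0}) \<le> Inf (ereal ` {t. 0 \<le> t \<and> X' t < 0}) + ereal \<delta>"
proof (rule ccontr)
  define S' where "S' = {t. 0 \<le> t \<and> X' t < 0}"
  define S where "S = {t. 0 \<le> t \<and> X t < 0}"
  assume "\<not> ?thesis"
  then have h1: "Inf (ereal ` S') \<le> ereal T" and h2: "Inf (ereal ` S') + ereal \<delta> < Inf (ereal ` S)"
    unfolding S_def S'_def by auto
  have ne: "S' \<noteq> {}" using h1 by (auto simp: top_ereal_def)
  have ge0: "0 \<le> Inf (ereal ` S')" by (rule Inf_greatest) (auto simp: S'_def)
  obtain r where r: "Inf (ereal ` S') = ereal r" using h1 ge0 by (cases "Inf (ereal ` S')") auto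
  have r0: "0 \<le> r" and rT: "r \<le> T" using r ge0 h1 by auto
  have "Inf (ereal ` S') < ereal (r + \<delta>/2)" using r dpos by simp
  then obtain t0 where t0S: "t0 \<in> S'" and t0lt: "t0 < r + \<delta>/2"
    by (auto simp: Inf_less_iff)
  have rt0: "r \<le> t0" using t0S r by (metis INF_lower ereal_less_eq(3))
  have t00: "0 \<le> t0" and X't0: "X' t0 < 0" using t0S by (auto simp: S'_def)
  define t1 where "t1 = t0 + \<delta>/2"
  have t1T: "t1 \<le> T + \<delta>" "t0 \<le> T + \<delta>" using t0lt rT dpos unfolding t1_def by auto
  have Xnn: "0 \<le> X s" if "0 \<le> s" "s \<le> t1" for s
  proof (rule ccontr)
    assume "\<not> 0 \<le> X s"
    then have "s \<in> S" using that by (auto simp: S_def)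
    then have "Inf (ereal ` S) \<le> ereal s" by (simp add: INF_lower)
    also have "\<dots> < ereal (r + \<delta>)" using that t0lt unfolding t1_def by simp
    finally show False using h2 r by simp
  qed
  have monomax: "mono_on {0..} (\<lambda>s. max (Cp s) c)" using mono by (rule mono_max)
  have diffI: "integral {0..t0} (\<lambda>s. max (Cp s) c) - integral {0..t0} Cp \<le> (c - p) * t0"
  proof -
    have "integral {0..t0} (\<lambda>s. max (Cp s) c) - integral {0..t0} Cp
        = integral {0..t0} (\<lambda>s. max (Cp s) c - Cp s)"
      by (rule integral_diff[symmetric]) (auto intro!: intC mono monomax)
    also have "\<dots> \<le> integral {0..t0} (\<lambda>s. c - p)"
    proof (rule integral_le)
      show "(\<lambda>s. max (Cp s) c - Cp s) integrable_on {0..t0}"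
        by (rule integrable_diff[OF intC[OF monomax order_refl] intC[OF mono order_refl]])
      show "(\<lambda>s. c - p) integrable_on {0..t0}" by (rule integrable_const_ivl)
      fix s assume "s \<in> {0..t0}"
      then have "p \<le> Cp s" using bnd by auto
      then show "max (Cp s) c - Cp s \<le> c - p" using pc by (simp add: max_def)
    qed
    also have "\<dots> = (c - p) * t0" using t00 by simp
    finally show ?thesis .
  qed
  have Xt0: "X t0 < (c - p) * (T + \<delta>)"
  proof -
    have "X t0 = X' t0 + (integral {0..t0} (\<lambda>s. max (Cp s) c) - integral {0..t0} Cp)"
      unfolding X_def X'_def by simp
    also have "\<dots> < (c - p) * t0" using X't0 diffI by simp
    also have "\<dots> \<le> (c - p) * (T + \<delta>)" using t1T pc by (intro mult_left_mono) auto
    finally show ?thesis .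
  qed
  have comb: "integral {0..t1} Cp = integral {0..t0} Cp + integral {t0..t1} Cp"
    using Henstock_Kurzweil_Integration.integral_combine[of 0 t0 t1 Cp] intC[OF mono, of 0 t1] t00 dpos by (simp add: t1_def)
  have Jlow: "(t1 - t0) * Cp t0 \<le> integral {t0..t1} Cp"
  proof -
    have "integral {t0..t1} (\<lambda>s. Cp t0) \<le> integral {t0..t1} Cp"
      by (rule integral_le) (use t00 in \<open>auto intro!: integrable_const_ivl intC mono mono_onD[OF mono]\<close>)
    then show ?thesis using dpos by (simp add: t1_def)
  qed
  have I0: "integral {0..t0} Cp \<le> t0 * Cp t0" "p * t0 \<le> integral {0..t0} Cp"
  proof -
    have "integral {0..t0} Cp \<le> integral {0..t0} (\<lambda>s. Cp t0)"
      by (rule integral_le) (use t00 in \<open>auto intro!: integrable_const_ivl intC mono mono_onD[OF mono]\<close>)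
    then show "integral {0..t0} Cp \<le> t0 * Cp t0" using t00 by simp
    have "integral {0..t0} (\<lambda>s. p) \<le> integral {0..t0} Cp"
      by (rule integral_le) (use t00 in \<open>auto intro!: integrable_const_ivl intC mono bnd\<close>)
    then show "p * t0 \<le> integral {0..t0} Cp" using t00 by (simp add: mult.commute)
  qed
  have N01: "N t0 \<le> N t1" "N t1 \<le> n0"
    using Nmono[of t0 t1] Nbd[of t1] t00 t1T dpos by (auto simp: t1_def)
  have sumsplit: "(\<Sum>i<N t1. u i) = (\<Sum>i<N t0. u i) + (\<Sum>i\<in>{N t0..<N t1}. u i)"
    using N01 by (simp add: lessThan_atLeast0 sum.atLeastLessThan_concat)
  have eta0: "0 \<le> (c - p) * (T + \<delta>)" using pc T dpos by simp
  have upos: "0 \<le> u i" if "i \<in> {N t0..<N t1}" for i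
    using ubig[of i] that N01 eta0 by auto
  have X1: "X t1 = X t0 + p * (t1 - t0) - (\<Sum>i\<in>{N t0..<N t1}. u i) - integral {t0..t1} Cp"
    unfolding X_def using sumsplit comb by (simp add: algebra_simps)
  have Cp0: "p \<le> Cp t0" using bnd t00 by simp
  have X1nn: "0 \<le> X t1" using Xnn[of t1] t00 dpos by (simp add: t1_def)
  show False
  proof (cases "N t0 < N t1")
    case True
    have "u (N t0) \<le> (\<Sum>i\<in>{N t0..<N t1}. u i)"
      using True by (intro member_le_sum upos) auto
    moreover have "(c - p) * (T + \<delta>) \<le> u (N t0)" using ubig True N01 by simp
    moreover have "p * (t1 - t0) \<le> (t1 - t0) * Cp t0" using Cp0 dpos by (simp add: t1_def)
    ultimately have "X t1 < 0" using X1 Xt0 Jlow by linarith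
    then show False using X1nn by simp
  next
    case False
    then have eqN: "N t1 = N t0" using N01 by simp
    have "(t1 - t0) * (Cp t0 - p) \<le> X t0"
      using X1 eqN Jlow X1nn by (simp add: algebra_simps)
    then have "(\<delta>/2) * (Cp t0 - p) < (c - p) * (T + \<delta>)" using Xt0 by (simp add: t1_def)
    then have cb: "Cp t0 - p < 2 * (c - p) * (T + \<delta>) / \<delta>" using dpos by (simp add: field_simps)
    have tb: "t0 * (Cp t0 - p) \<le> (T + \<delta>) * (2 * (c - p) * (T + \<delta>) / \<delta>)"
      using cb t1T t00 Cp0 by (intro mult_mono) auto
    define n where "n = N t0"
    have Xt0eq: "X t0 = x - (\<Sum>i<n. u i) + (p * t0 - integral {0..t0} Cp)"
      unfolding X_def n_def by simp
    have up: "x - (\<Sum>i<n. u i) < (c - p) * G"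
    proof -
      have "integral {0..t0} Cp - p * t0 \<le> t0 * (Cp t0 - p)" using I0 by (simp add: algebra_simps)
      then have "x - (\<Sum>i<n. u i) < (c - p) * (T + \<delta>) + (T + \<delta>) * (2 * (c - p) * (T + \<delta>) / \<delta>)"
        using Xt0eq Xt0 tb by linarith
      also have "\<dots> = (c - p) * G" unfolding G using dpos by (simp add: field_simps)
      finally show ?thesis .
    qed
    have lo: "(\<Sum>i<n. u i) \<le> x" using Xt0eq I0 Xnn[of t0] t00 dpos by (simp add: t1_def)
    show False
    proof (cases "n = 0")
      case True then show ?thesis using up xG by simp
    next
      case False
      then show ?thesis using Sgap[of n] up lo N01 by (simp add: n_def)
    qed
  qed
qed

lemma ennreal_le_diff_add: "(a::ennreal) \<le> (a - b) + b"
  by (metis add.commute add_diff_le_ennreal diff_add_cancel_ennreal linorder_le_cases add_increasing2 zero_le diff_eq_0_iff_ennreal order_refl)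

lemma nn_integral_sub_add:
  assumes k: "k \<in> borel_measurable M" and kfin: "\<And>x. k x < top"
    and le: "\<And>x. x \<in> space M \<Longrightarrow> f x \<le> g x + k x"
  shows "integral\<^sup>N M f \<le> integral\<^sup>N M g + integral\<^sup>N M k"
  unfolding nn_integral_def[of M f]
proof (rule SUP_least, clarify)
  fix h assume h: "simple_function M h" "h \<le> f"
  have hm: "h \<in> borel_measurable M" using h(1) by (rule borel_measurable_simple_function)
  have "integral\<^sup>S M h = integral\<^sup>N M h" using h by (simp add: nn_integral_eq_simple_integral)
  also have "\<dots> \<le> (\<integral>\<^sup>+x. (h x - k x) + k x \<partial>M)"
    by (rule nn_integral_mono) (rule ennreal_le_diff_add)
  also have "\<dots> = (\<integral>\<^sup>+x. (h x - k x) \<partial>M) + integral\<^sup>N M k"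
    using hm k by (intro nn_integral_add) auto
  also have "(\<integral>\<^sup>+x. (h x - k x) \<partial>M) \<le> integral\<^sup>N M g"
  proof (rule nn_integral_mono)
    fix x assume "x \<in> space M"
    then have "h x \<le> g x + k x" using le h(2) order_trans[of "h x" "f x"] by (auto simp: le_fun_def)
    then show "h x - k x \<le> g x" using kfin[of x] by (auto simp: ennreal_minus_le_iff add.commute)
  qed
  finally show "integral\<^sup>S M h \<le> integral\<^sup>N M g + integral\<^sup>N M k" by (simp add: add_right_mono)
qed

lemma set_ab_borel:
  fixes a b :: ereal shows "{s::real. 0 \<le> s \<and> a \<le> ereal s \<and> ereal s < b} \<in> sets borel"
proof -
  have "{s::real. 0 \<le> s \<and> a \<le> ereal s \<and> ereal s < b} = (\<lambda>s. ereal s) -` {a..<b} \<inter> space borel \<inter> {0..}" by auto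
  also have "\<dots> \<in> sets borel" by (intro sets.Int measurable_sets[of _ borel borel]) auto
  finally show ?thesis .
qed

lemma exp_tail:
  assumes q: "0 < q"
  shows "(\<integral>\<^sup>+s. ennreal (exp (- q * s)) * indicator {T..} s \<partial>lborel) = ennreal (exp (- q * T) / q)"
proof -
  have "(\<integral>\<^sup>+s. ennreal (exp (- q * s)) * indicator {T..} s \<partial>lborel) = ennreal (0 - (- exp (- q * T) / q))"
  proof (rule nn_integral_FTC_atLeast)
    show "(\<lambda>s. exp (- q * s)) \<in> borel_measurable borel" by measurable
    fix s :: real
    show "((\<lambda>s. - exp (- q * s) / q) has_real_derivative exp (- q * s)) (at s)"
      using q by (auto intro!: derivative_eq_intros simp: field_simps)
    show "0 \<le> exp (- q * s)" by simp
  next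
    have "((\<lambda>s. - exp (- q * s) / q) \<longlongrightarrow> - 0 / q) at_top"
      using q by (intro tendsto_intros filterlim_compose[OF exp_at_bot] filterlim_tendsto_neg_mult_at_bot[OF tendsto_const] filterlim_ident) auto
    then show "((\<lambda>s. - exp (- q * s) / q) \<longlongrightarrow> 0) at_top" by simp
  qed
  also have "\<dots> = ennreal (exp (- q * T) / q)" by simp
  finally show ?thesis .
qed

lemma loss:
  fixes Cp :: "real \<Rightarrow> real" and a b :: ereal
  assumes ab: "a \<le> b" and alt: "ereal T < a \<or> b \<le> a + ereal \<delta>" and T: "0 \<le> T" and d: "0 < \<delta>" and q: "0 < q"
    and Cb: "\<And>t. 0 \<le> t \<Longrightarrow> 0 \<le> Cp t \<and> Cp t \<le> cbar" and c: "0 \<le> c"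
  shows "(\<integral>\<^sup>+s. ennreal (indicator {s. 0 \<le> s \<and> ereal s < b} s * exp (- q * s) * Cp s) \<partial>lborel)
       \<le> (\<integral>\<^sup>+s. ennreal (indicator {s. 0 \<le> s \<and> ereal s < a} s * exp (- q * s) * max (Cp s) c) \<partial>lborel)
         + ennreal (cbar * max (exp (- q * T) / q) \<delta>)"
proof -
  have cb0: "0 \<le> cbar" using Cb[of 0] by auto
  define A where "A = {s::real. 0 \<le> s \<and> a \<le> ereal s \<and> ereal s < b}"
  have Ab[measurable]: "A \<in> sets borel" unfolding A_def by (rule set_ab_borel)
  define h where "h s = ennreal (cbar * indicator A s * exp (- q * s))" for s
  have hm: "h \<in> borel_measurable lborel" unfolding h_def by measurable
  have pt: "ennreal (indicator {s. 0 \<le> s \<and> ereal s < b} s * exp (- q * s) * Cp s)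
      \<le> ennreal (indicator {s. 0 \<le> s \<and> ereal s < a} s * exp (- q * s) * max (Cp s) c) + h s" for s
  proof (cases "0 \<le> s \<and> ereal s < b")
    case True
    show ?thesis
    proof (cases "ereal s < a")
      case True
      have "indicator {s. 0 \<le> s \<and> ereal s < b} s * exp (- q * s) * Cp s
          \<le> indicator {s. 0 \<le> s \<and> ereal s < a} s * exp (- q * s) * max (Cp s) c"
        using True \<open>0 \<le> s \<and> ereal s < b\<close> by simp
      then show ?thesis by (intro add_increasing2[OF zero_le] ennreal_leI)
    next
      case False
      then have "a \<le> ereal s" by simp
      then have "h s = ennreal (cbar * exp (- q * s))" using True by (simp add: h_def A_def)
      moreover have "indicator {s. 0 \<le> s \<and> ereal s < b} s * exp (- q * s) * Cp s \<le> cbar * exp (- q * s)"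
        using True Cb[of s] by (simp add: mult.commute)
      ultimately have "ennreal (indicator {s. 0 \<le> s \<and> ereal s < b} s * exp (- q * s) * Cp s) \<le> h s"
        by (simp add: ennreal_leI)
      then show ?thesis by (rule order_trans) (rule add_increasing[OF zero_le order_refl])
    qed
  qed simp
  have "(\<integral>\<^sup>+s. ennreal (indicator {s. 0 \<le> s \<and> ereal s < b} s * exp (- q * s) * Cp s) \<partial>lborel)
       \<le> (\<integral>\<^sup>+s. ennreal (indicator {s. 0 \<le> s \<and> ereal s < a} s * exp (- q * s) * max (Cp s) c) \<partial>lborel)
         + integral\<^sup>N lborel h"
    by (rule nn_integral_sub_add[OF hm]) (simp add: h_def, rule pt)
  also have "integral\<^sup>N lborel h \<le> ennreal (cbar * max (exp (- q * T) / q) \<delta>)"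
  proof (cases "ereal T < a")
    case True
    have "integral\<^sup>N lborel h \<le> (\<integral>\<^sup>+s. ennreal cbar * (ennreal (exp (- q * s)) * indicator {T..} s) \<partial>lborel)"
    proof (rule nn_integral_mono)
      fix s :: real
      show "h s \<le> ennreal cbar * (ennreal (exp (- q * s)) * indicator {T..} s)"
      proof (cases "0 \<le> s \<and> a \<le> ereal s \<and> ereal s < b")
        case True
        then have "T \<le> s" using \<open>ereal T < a\<close> by (metis ereal_less_eq(3) less_imp_le order_trans)
        with True show ?thesis by (simp add: h_def A_def ennreal_mult' cb0)
      qed (simp add: h_def A_def)
    qed
    also have "\<dots> = ennreal cbar * ennreal (exp (- q * T) / q)"
      using exp_tail[OF q, of T] by (simp add: nn_integral_cmult)
    also have "\<dots> \<le> ennreal (cbar * max (exp (- q * T) / q) \<delta>)"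
    proof -
      have "cbar * (exp (- q * T) / q) \<le> cbar * max (exp (- q * T) / q) \<delta>"
        using cb0 by (intro mult_left_mono) auto
      then show ?thesis using cb0 by (simp add: ennreal_mult'[symmetric] ennreal_leI)
    qed
    finally show ?thesis .
  next
    case False
    then have ble: "b \<le> a + ereal \<delta>" using alt by simp
    show ?thesis
    proof (cases a)
      case (real r)
      have "integral\<^sup>N lborel h \<le> (\<integral>\<^sup>+s. ennreal cbar * indicator {r..r+\<delta>} s \<partial>lborel)"
      proof (rule nn_integral_mono)
        fix s :: real
        show "h s \<le> ennreal cbar * indicator {r..r+\<delta>} s"
        proof (cases "0 \<le> s \<and> a \<le> ereal s \<and> ereal s < b")
          case True
          have "ereal s < b" using True by simp
          also have "b \<le> ereal (r + \<delta>)" using ble real by simp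
          finally have "ereal s < ereal (r + \<delta>)" .
          then have "r \<le> s" "s \<le> r + \<delta>" using True real by auto
          have "exp (- (q * s)) \<le> 1" using True q by simp
          then have "cbar * exp (- (q * s)) \<le> cbar" using cb0 by (metis mult_left_mono mult.right_neutral)
          with True \<open>r \<le> s\<close> \<open>s \<le> r + \<delta>\<close> show ?thesis by (simp add: h_def A_def ennreal_leI)
        qed (simp add: h_def A_def)
      qed
      also have "\<dots> = ennreal (cbar * \<delta>)"
        using d cb0 by (simp add: nn_integral_cmult_indicator ennreal_mult)
      also have "\<dots> \<le> ennreal (cbar * max (exp (- q * T) / q) \<delta>)"
        using cb0 by (simp add: ennreal_leI mult_left_mono)
      finally show ?thesis .
    next
      case PInf
      then have "h = (\<lambda>_. 0)" by (auto simp: h_def A_def fun_eq_iff)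
      then show ?thesis by simp
    next
      case MInf
      then have "h = (\<lambda>_. 0)" using ble by (auto simp: h_def A_def fun_eq_iff)
      then show ?thesis by simp
    qed
  qed
  finally show ?thesis by (simp add: add_left_mono)
qed

definition XX :: "(nat \<Rightarrow> 'a \<Rightarrow> real) \<Rightarrow> (nat \<Rightarrow> 'a \<Rightarrow> real) \<Rightarrow> nat + nat \<Rightarrow> 'a \<Rightarrow> real" where
  "XX E U = (\<lambda>i. case i of Inl n \<Rightarrow> E n | Inr n \<Rightarrow> U n)"

lemma cl_basic:
  assumes cl: "cramer_lundberg M \<beta> p F E U"
  shows "prob_space M" "0 < \<beta>" "0 < p"
    and "\<And>n. distributed M lborel (E n) (exponential_density \<beta>)"
    and "\<And>n. U n \<in> borel_measurable M"
    and "\<And>n y. measure M {\<omega> \<in> space M. U n \<omega> \<le> y} = F y"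
    and "\<And>n. AE \<omega> in M. 0 < U n \<omega>"
    and "prob_space.indep_vars M (\<lambda>_. borel) (XX E U) UNIV"
    and "\<exists>K>0. \<forall>a b. a < b \<longrightarrow> 0 \<le> F b - F a \<and> F b - F a \<le> K * (b - a)"
  using cl unfolding cramer_lundberg_def XX_def by auto

lemma E_meas:
  assumes cl: "cramer_lundberg M \<beta> p F E U"
  shows "E n \<in> borel_measurable M"
  using distributed_measurable[OF cl_basic(4)[OF cl, of n]] by (simp add: measurable_lborel2)

lemma E_nonpos_null:
  assumes cl: "cramer_lundberg M \<beta> p F E U"
  shows "measure M {\<omega> \<in> space M. E n \<omega> \<le> 0} = 0"
proof -
  interpret prob_space M by (rule cl_basic(1)[OF cl])
  show ?thesis
    using exponential_distributedD_le[OF cl_basic(4)[OF cl, of n] order_refl cl_basic(2)[OF cl]] by simp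
qed

lemma arrival_prob:
  assumes cl: "cramer_lundberg M \<beta> p F E U" and T: "0 \<le> T"
  shows "measure M {\<omega> \<in> space M. arrival E n \<omega> \<le> T} = erlang_CDF n \<beta> T"
proof -
  interpret prob_space M by (rule cl_basic(1)[OF cl])
  have ind: "indep_vars (\<lambda>_. borel) (XX E U) (Inl ` {..n})"
    by (rule indep_vars_subset[OF cl_basic(8)[OF cl]]) auto
  have "distributed M lborel (\<lambda>x. \<Sum>i\<in>Inl ` {..n}. XX E U i x) (erlang_density (card (Inl ` {..n} :: (nat + nat) set) - 1) \<beta>)"
    by (rule exponential_distributed_sum[OF _ _ cl_basic(2)[OF cl] _ ind])
       (auto simp: XX_def intro: cl_basic(4)[OF cl])
  moreover have "(\<lambda>x. \<Sum>i\<in>Inl ` {..n}. XX E U i x) = arrival E n"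
    by (simp add: fun_eq_iff sum.reindex XX_def arrival_def)
  moreover have "card (Inl ` {..n} :: (nat + nat) set) = Suc n"
    by (simp add: card_image)
  ultimately have D: "distributed M lborel (arrival E n) (erlang_density n \<beta>)" by simp
  show ?thesis using erlang_distributed_le[OF D cl_basic(2)[OF cl] T] by simp
qed

lemma erlang_CDF_lim:
  assumes "0 < l"
  shows "(\<lambda>n. erlang_CDF n l T) \<longlonglongrightarrow> 0"
proof (cases "T < 0")
  case True then show ?thesis by (simp add: erlang_CDF_def)
next
  case False
  have "(\<lambda>n. (l * T) ^ n /\<^sub>R fact n) sums exp (l * T)" by (rule exp_converges)
  then have "(\<lambda>n. \<Sum>i<n. (l * T) ^ i / fact i) \<longlonglongrightarrow> exp (l * T)"
    by (simp add: sums_def divide_inverse mult.commute)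
  then have "(\<lambda>n. \<Sum>i<Suc n. (l * T) ^ i / fact i) \<longlonglongrightarrow> exp (l * T)"
    by (rule LIMSEQ_Suc)
  then have "(\<lambda>n. 1 - (\<Sum>i\<le>n. (l * T) ^ i / fact i) * exp (- l * T)) \<longlonglongrightarrow> 1 - exp (l * T) * exp (- l * T)"
    by (intro tendsto_intros) (simp add: lessThan_Suc_atMost)
  moreover have "1 - exp (l * T) * exp (- l * T) = 0" by (simp add: exp_minus field_simps)
  moreover have "erlang_CDF n l T = 1 - (\<Sum>i\<le>n. (l * T) ^ i / fact i) * exp (- l * T)" for n
    using False by (simp add: erlang_CDF_def sum_distrib_right)
  ultimately show ?thesis by simp
qed

lemma F0:
  assumes cl: "cramer_lundberg M \<beta> p F E U"
  shows "F 0 = 0"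
proof -
  interpret prob_space M by (rule cl_basic(1)[OF cl])
  have m: "{\<omega> \<in> space M. U 0 \<omega> \<le> 0} \<in> sets M" using cl_basic(5)[OF cl, of 0] by measurable
  have "AE \<omega> in M. \<omega> \<notin> {\<omega> \<in> space M. U 0 \<omega> \<le> 0}"
    using cl_basic(7)[OF cl, of 0] by eventually_elim auto
  then have "{\<omega> \<in> space M. U 0 \<omega> \<le> 0} \<in> null_sets M" using AE_iff_null_sets[OF m] by simp
  then have "emeasure M {\<omega> \<in> space M. U 0 \<omega> \<le> 0} = 0" by (rule null_setsD1)
  then show ?thesis using cl_basic(6)[OF cl, of 0 0] by (simp add: measure_def)
qed

lemma U_interval:
  assumes cl: "cramer_lundberg M \<beta> p F E U" and "lo \<le> hi"
  shows "measure M {\<omega> \<in> space M. lo < U n \<omega> \<and> U n \<omega> \<le> hi} = F hi - F lo"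
proof -
  interpret prob_space M by (rule cl_basic(1)[OF cl])
  have "{\<omega> \<in> space M. lo < U n \<omega> \<and> U n \<omega> \<le> hi} = {\<omega> \<in> space M. U n \<omega> \<le> hi} - {\<omega> \<in> space M. U n \<omega> \<le> lo}"
    using assms by auto
  moreover have "{\<omega> \<in> space M. U n \<omega> \<le> lo} \<subseteq> {\<omega> \<in> space M. U n \<omega> \<le> hi}" using assms by auto
  moreover have "{\<omega> \<in> space M. U n \<omega> \<le> hi} \<in> events" "{\<omega> \<in> space M. U n \<omega> \<le> lo} \<in> events"
    using cl_basic(5)[OF cl, of n] by measurable
  ultimately show ?thesis using cl_basic(6)[OF cl] by (simp add: finite_measure_Diff)
qed

lemma S_interval:
  assumes cl: "cramer_lundberg M \<beta> p F E U"
    and K: "\<And>a b. a < b \<Longrightarrow> F b - F a \<le> K * (b - a)" and lohi: "lo < hi"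
  shows "measure M {\<omega> \<in> space M. lo < (\<Sum>i<Suc m. U i \<omega>) \<and> (\<Sum>i<Suc m. U i \<omega>) \<le> hi} \<le> K * (hi - lo)"
proof -
  interpret prob_space M by (rule cl_basic(1)[OF cl])
  define Sm where "Sm = (\<lambda>\<omega>. \<Sum>i<m. U i \<omega>)"
  have Um[measurable]: "U m \<in> borel_measurable M" by (rule cl_basic(5)[OF cl])
  have Smm[measurable]: "Sm \<in> borel_measurable M" unfolding Sm_def using cl_basic(5)[OF cl] by measurable
  have "indep_var borel (XX E U (Inr m)) borel (\<lambda>\<omega>. \<Sum>i\<in>Inr ` {..<m}. XX E U i \<omega>)"
    by (rule indep_vars_sum) (auto intro: indep_vars_subset[OF cl_basic(8)[OF cl]])
  moreover have "(\<lambda>\<omega>. \<Sum>i\<in>Inr ` {..<m}. XX E U i \<omega>) = Sm"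
    by (simp add: fun_eq_iff sum.reindex XX_def Sm_def)
  ultimately have ind: "indep_var borel (U m) borel Sm" by (simp add: XX_def)
  have conv: "distr M borel (\<lambda>\<omega>. U m \<omega> + Sm \<omega>) = convolution (distr M borel Sm) (distr M borel (U m))"
    using sum_indep_random_variable[OF ind Um Smm]
    by (simp add: convolution_commutative prob_space.finite_measure prob_space_distr)
  have Summ: "(\<lambda>\<omega>. U m \<omega> + Sm \<omega>) \<in> measurable M borel" by measurable
  have Sm_eq: "(\<Sum>i<Suc m. U i \<omega>) = U m \<omega> + Sm \<omega>" for \<omega> by (simp add: Sm_def)
  define A where "A = {lo<..hi}"
  have Ab: "A \<in> sets borel" by (simp add: A_def)
  have "emeasure M {\<omega> \<in> space M. lo < (\<Sum>i<Suc m. U i \<omega>) \<and> (\<Sum>i<Suc m. U i \<omega>) \<le> hi}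
      = emeasure (distr M borel (\<lambda>\<omega>. U m \<omega> + Sm \<omega>)) A"
    by (subst emeasure_distr[OF Summ Ab]) (auto simp: A_def Sm_def add.commute intro!: arg_cong[where f="emeasure M"])
  also have "\<dots> = (\<integral>\<^sup>+x. emeasure (distr M borel (U m)) {a. a + x \<in> A} \<partial>distr M borel Sm)"
    unfolding conv
    by (rule convolution_emeasure[OF Ab]) (auto simp: prob_space.finite_measure prob_space_distr)
  also have "\<dots> \<le> (\<integral>\<^sup>+x. ennreal (K * (hi - lo)) \<partial>distr M borel Sm)"
  proof (rule nn_integral_mono)
    fix x
    have "emeasure (distr M borel (U m)) {a. a + x \<in> A} = emeasure M {\<omega> \<in> space M. lo - x < U m \<omega> \<and> U m \<omega> \<le> hi - x}"
      by (subst emeasure_distr) (auto simp: A_def intro!: arg_cong[where f="emeasure M"])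
    also have "\<dots> = ennreal (F (hi - x) - F (lo - x))"
      using U_interval[OF cl, of "lo - x" "hi - x" m] lohi by (simp add: emeasure_eq_measure)
    also have "\<dots> \<le> ennreal (K * (hi - lo))"
      using K[of "lo - x" "hi - x"] lohi by (intro ennreal_leI) simp
    finally show "emeasure (distr M borel (U m)) {a. a + x \<in> A} \<le> ennreal (K * (hi - lo))" .
  qed
  also have "\<dots> = ennreal (K * (hi - lo))"
  proof -
    have "emeasure (distr M borel Sm) (space (distr M borel Sm)) = 1"
      using prob_space.emeasure_space_1[OF prob_space_distr[OF Smm]] by simp
    then show ?thesis by simp
  qed
  finally have "emeasure M {\<omega> \<in> space M. lo < (\<Sum>i<Suc m. U i \<omega>) \<and> (\<Sum>i<Suc m. U i \<omega>) \<le> hi} \<le> ennreal (K * (hi - lo))" .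
  moreover have "0 \<le> K * (hi - lo)"
  proof -
    from cl_basic(9)[OF cl] have "0 \<le> F hi - F lo" using lohi by blast
    then show ?thesis using K[OF lohi] by linarith
  qed
  ultimately show ?thesis by (simp add: emeasure_eq_measure)
qed

definition fJ :: "(nat \<Rightarrow> 'a \<Rightarrow> real) \<Rightarrow> (nat \<Rightarrow> 'a \<Rightarrow> real) \<Rightarrow> real \<Rightarrow> real \<Rightarrow> real
    \<Rightarrow> (real \<Rightarrow> 'a \<Rightarrow> real) \<Rightarrow> 'a \<Rightarrow> ennreal" where
  "fJ E U p q x C \<omega> = (\<integral>\<^sup>+ s. ennreal (indicator {s. 0 \<le> s \<and> ereal s < ruin_time E U p x C \<omega>} s * exp (- q * s) * C s \<omega>) \<partial>lborel)"

lemma Jval_fJ: "Jval M E U p q x C = enn2real (\<integral>\<^sup>+\<omega>. fJ E U p q x C \<omega> \<partial>M)"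
  by (simp add: Jval_def fJ_def)

lemma fJ_bound:
  assumes q: "0 < q" and Cb: "\<And>t. 0 \<le> t \<Longrightarrow> C t \<omega> \<le> cbar" and cb0: "0 \<le> cbar"
  shows "fJ E U p q x C \<omega> \<le> ennreal (cbar / q)"
proof -
  have "fJ E U p q x C \<omega> \<le> (\<integral>\<^sup>+s. ennreal cbar * (ennreal (exp (- q * s)) * indicator {0..} s) \<partial>lborel)"
    unfolding fJ_def
  proof (rule nn_integral_mono)
    fix s :: real
    show "ennreal (indicator {s. 0 \<le> s \<and> ereal s < ruin_time E U p x C \<omega>} s * exp (- q * s) * C s \<omega>)
        \<le> ennreal cbar * (ennreal (exp (- q * s)) * indicator {0..} s)"
    proof (cases "0 \<le> s \<and> ereal s < ruin_time E U p x C \<omega>")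
      case True
      then have "exp (- q * s) * C s \<omega> \<le> exp (- q * s) * cbar" using Cb[of s] by (intro mult_left_mono) auto
      then show ?thesis using True cb0 by (simp add: ennreal_mult'[symmetric] ennreal_leI mult.commute)
    qed simp
  qed
  also have "\<dots> = ennreal cbar * ennreal (exp (- q * 0) / q)"
    using exp_tail[OF q, of 0] by (simp add: nn_integral_cmult)
  also have "\<dots> = ennreal (cbar / q)" using cb0 by (simp add: ennreal_mult'[symmetric])
  finally show ?thesis .
qed

lemma Jval_bound:
  assumes pM: "prob_space M" and q: "0 < q" and cb0: "0 \<le> cbar"
    and Cb: "\<And>\<omega> t. \<omega> \<in> space M \<Longrightarrow> 0 \<le> t \<Longrightarrow> C t \<omega> \<le> cbar"
  shows "Jval M E U p q x C \<le> cbar / q" "(\<integral>\<^sup>+\<omega>. fJ E U p q x C \<omega> \<partial>M) \<le> ennreal (cbar / q)"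
proof -
  interpret prob_space M by (rule pM)
  have "(\<integral>\<^sup>+\<omega>. fJ E U p q x C \<omega> \<partial>M) \<le> (\<integral>\<^sup>+\<omega>. ennreal (cbar / q) \<partial>M)"
    by (rule nn_integral_mono) (rule fJ_bound[OF q _ cb0], rule Cb)
  also have "\<dots> = ennreal (cbar / q)" by (simp add: emeasure_space_1)
  finally show "(\<integral>\<^sup>+\<omega>. fJ E U p q x C \<omega> \<partial>M) \<le> ennreal (cbar / q)" .
  then show "Jval M E U p q x C \<le> cbar / q"
    unfolding Jval_fJ using q cb0 by (simp add: enn2real_leI)
qed

lemma ruin_le:
  assumes mono: "mono_on {0..} (\<lambda>t. C t \<omega>)"
  shows "ruin_time E U p x (\<lambda>t \<omega>. max (C t \<omega>) c) \<omega> \<le> ruin_time E U p x C \<omega>"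
  unfolding ruin_time_def
proof (rule Inf_superset_mono, rule image_mono, clarify)
  fix t assume t: "0 \<le> t" "controlled E U p x C t \<omega> < 0"
  have "integral {0..t} (\<lambda>s. C s \<omega>) \<le> integral {0..t} (\<lambda>s. max (C s \<omega>) c)"
    by (rule integral_le) (auto intro!: intC[OF mono] intC[OF mono_max[OF mono]])
  then show "controlled E U p x (\<lambda>t \<omega>. max (C t \<omega>) c) t \<omega> < 0"
    using t by (simp add: controlled_def)
qed

lemma adm_else:
  assumes "0 < x"
  shows "admissible M E U p cbar x c = {C. (\<forall>t\<ge>0. \<forall>B\<in>sets borel.
                  C t -` B \<inter> space M \<in> completed_filt M (surplus E U p x) t) \<and>
               (\<forall>\<omega>\<in>space M.
                  mono_on {0..} (\<lambda>t. C t \<omega>) \<and>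
                  (\<forall>t\<ge>0. continuous (at_right t) (\<lambda>s. C s \<omega>)) \<and>
                  (\<forall>t>0. \<exists>l. ((\<lambda>s. C s \<omega>) \<longlongrightarrow> l) (at_left t)) \<and>
                  (\<forall>t\<ge>0. c \<le> C t \<omega> \<and> C t \<omega> \<le> cbar) \<and>
                  (\<forall>t>0. ((\<lambda>s. C s \<omega>) \<longlongrightarrow> p) (at_left t) \<and>
                         controlled E U p x C t \<omega> = 0 \<longrightarrow>
                         (\<forall>s. t \<le> s \<and> ereal s < ruin_time E U p x C \<omega> \<longrightarrow> C s \<omega> = p)))}"
  using assms by (simp add: admissible_def)

lemma adm_mono:
  assumes "0 < x" "p \<le> c"
  shows "admissible M E U p cbar x c \<subseteq> admissible M E U p cbar x p"
proof
  fix C assume C: "C \<in> admissible M E U p cbar x c"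
  have le: "\<And>\<omega> t. \<omega> \<in> space M \<Longrightarrow> 0 \<le> t \<Longrightarrow> c \<le> C t \<omega>"
    using C unfolding adm_else[OF assms(1)] by simp
  show "C \<in> admissible M E U p cbar x p"
    using C unfolding adm_else[OF assms(1)] mem_Collect_eq
    using order_trans[OF assms(2) le] by simp
qed

lemma const_adm:
  assumes x: "0 < x" and c: "c \<le> c0" "c0 \<le> cbar"
  shows "(\<lambda>t \<omega>. c0) \<in> admissible M E U p cbar x c"
proof -
  have n0: "{} \<in> null_sets M" by simp
  have G1: "(\<lambda>\<omega>. c0) -` B \<inter> space M \<in> completed_filt M (surplus E U p x) t" for t B
  proof -
    have "space M \<in> nat_filt M (surplus E U p x) t" unfolding nat_filt_def by (rule sigma_sets_top)
    then have sp: "space M \<in> completed_filt M (surplus E U p x) t"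
      unfolding completed_filt_def by (intro CollectI conjI bexI[OF _ n0] bexI[of _ "space M"]) auto
    have "{} \<in> nat_filt M (surplus E U p x) t" unfolding nat_filt_def by (rule sigma_sets.Empty)
    then have em: "{} \<in> completed_filt M (surplus E U p x) t"
      unfolding completed_filt_def by (intro CollectI conjI bexI[OF _ n0] bexI[of _ "{}"]) auto
    show ?thesis using sp em by (cases "c0 \<in> B") auto
  qed
  have G2: "((\<lambda>s. c0) \<longlongrightarrow> p) (at_left t) \<Longrightarrow> c0 = p" for t :: real
    by (simp add: tendsto_const_iff)
  have G3: "\<exists>l. ((\<lambda>s. c0) \<longlongrightarrow> l) (at_left t)" for t :: real by blast
  have G4: "mono_on {0..} (\<lambda>t::real. c0)" by (simp add: mono_on_def)
  show ?thesis unfolding adm_else[OF x] mem_Collect_eq using G1 G3 G4 c by simp (use G2 in blast)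
qed

lemma max_adm:
  assumes x: "0 < x" and C: "C \<in> admissible M E U p cbar x p" and c: "p < c" "c \<le> cbar"
  shows "(\<lambda>t \<omega>. max (C t \<omega>) c) \<in> admissible M E U p cbar x c"
proof -
  have C1: "\<And>t B. 0 \<le> t \<Longrightarrow> B \<in> sets borel \<Longrightarrow> C t -` B \<inter> space M \<in> completed_filt M (surplus E U p x) t"
    using C unfolding adm_else[OF x] by simp
  have C2: "\<And>\<omega>. \<omega> \<in> space M \<Longrightarrow> mono_on {0..} (\<lambda>t. C t \<omega>)"
    using C unfolding adm_else[OF x] by simp
  have C3: "\<And>\<omega> t. \<omega> \<in> space M \<Longrightarrow> 0 \<le> t \<Longrightarrow> continuous (at_right t) (\<lambda>s. C s \<omega>)"
    using C unfolding adm_else[OF x] by simp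
  have C4: "\<And>\<omega> t. \<omega> \<in> space M \<Longrightarrow> 0 < t \<Longrightarrow> \<exists>l. ((\<lambda>s. C s \<omega>) \<longlongrightarrow> l) (at_left t)"
    using C unfolding adm_else[OF x] by simp
  have C5: "\<And>\<omega> t. \<omega> \<in> space M \<Longrightarrow> 0 \<le> t \<Longrightarrow> C t \<omega> \<le> cbar"
    using C unfolding adm_else[OF x] by simp
  have G1: "(\<lambda>\<omega>. max (C t \<omega>) c) -` B \<inter> space M \<in> completed_filt M (surplus E U p x) t"
    if t: "0 \<le> t" and B: "B \<in> sets borel" for t B
  proof -
    have "(\<lambda>y. max y c) -` B \<in> sets borel"
      using measurable_sets[OF _ B, of "\<lambda>y. max y c" borel] by simp
    then have "C t -` ((\<lambda>y. max y c) -` B) \<inter> space M \<in> completed_filt M (surplus E U p x) t"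
      using C1 t by simp
    moreover have "(\<lambda>\<omega>. max (C t \<omega>) c) -` B \<inter> space M = C t -` ((\<lambda>y. max y c) -` B) \<inter> space M" by auto
    ultimately show ?thesis by simp
  qed
  have G2: "mono_on {0..} (\<lambda>t. max (C t \<omega>) c)" if "\<omega> \<in> space M" for \<omega>
    by (rule mono_max[OF C2[OF that]])
  have G3: "continuous (at_right t) (\<lambda>s. max (C s \<omega>) c)" if "\<omega> \<in> space M" "0 \<le> t" for \<omega> and t :: real
    using C3[OF that] by (intro continuous_max continuous_const)
  have G4: "\<exists>l. ((\<lambda>s. max (C s \<omega>) c) \<longlongrightarrow> l) (at_left t)" if om: "\<omega> \<in> space M" "0 < t" for \<omega> and t :: real
  proof -
    obtain l where "((\<lambda>s. C s \<omega>) \<longlongrightarrow> l) (at_left t)" using C4[OF om] by blast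
    then have "((\<lambda>s. max (C s \<omega>) c) \<longlongrightarrow> max l c) (at_left t)" by (intro tendsto_max tendsto_const)
    then show ?thesis by blast
  qed
  have G5: "max (C t \<omega>) c \<le> cbar" if "\<omega> \<in> space M" "0 \<le> t" for \<omega> and t :: real
    using C5[OF that] c by simp
  have G6: "\<not> ((\<lambda>s. max (C s \<omega>) c) \<longlongrightarrow> p) (at_left t)" for \<omega> and t :: real
  proof
    assume lim: "((\<lambda>s. max (C s \<omega>) c) \<longlongrightarrow> p) (at_left t)"
    have "c \<le> p"
      by (rule tendsto_lowerbound[OF lim]) (auto simp: trivial_limit_at_left_real)
    then show False using c by simp
  qed
  show ?thesis unfolding adm_else[OF x] mem_Collect_eq using G1 G2 G3 G4 G5 G6 by simp
qed

lemma pointwise_good: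
  assumes Cm: "mono_on {0..} (\<lambda>t. C t \<omega>)" and Cb: "\<And>t. 0 \<le> t \<Longrightarrow> p \<le> C t \<omega> \<and> C t \<omega> \<le> cbar"
    and p0: "0 < p" and pc: "p < c" and dpos: "0 < \<delta>" and T: "0 \<le> T" and q: "0 < q"
    and Epos: "\<And>i. 0 < E i \<omega>" and arr: "T + \<delta> < arrival E n0 \<omega>"
    and ubig: "\<And>i. i < n0 \<Longrightarrow> (c - p) * (T + \<delta>) \<le> U i \<omega>"
    and Sgap: "\<And>n. 1 \<le> n \<Longrightarrow> n \<le> n0 \<Longrightarrow> \<not> (x - (c-p)*G < (\<Sum>i<n. U i \<omega>) \<and> (\<Sum>i<n. U i \<omega>) \<le> x)"
    and G: "G = (T+\<delta>) * (1 + 2*(T+\<delta>)/\<delta>)" and xG: "(c-p)*G \<le> x"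
  shows "fJ E U p q x C \<omega> \<le> fJ E U p q x (\<lambda>t \<omega>. max (C t \<omega>) c) \<omega> + ennreal (cbar * max (exp (- q * T) / q) \<delta>)"
proof -
  have Narr: "n < n0" if "t \<le> T + \<delta>" "arrival E n \<omega> \<le> t" for n t
  proof (rule ccontr)
    assume "\<not> n < n0"
    then have "arrival E n0 \<omega> \<le> arrival E n \<omega>"
      unfolding arrival_def using Epos by (intro sum_mono2) (auto intro: less_imp_le)
    then show False using that arr by simp
  qed
  have sub: "{n. arrival E n \<omega> \<le> t} \<subseteq> {..<n0}" if "t \<le> T + \<delta>" for t
    using Narr[OF that] by auto
  have Nmono: "Npois E s \<omega> \<le> Npois E t \<omega>" if "0 \<le> s" "s \<le> t" "t \<le> T + \<delta>" for s t
    unfolding Npois_def using sub[OF that(3)] that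
    by (intro card_mono) (auto intro: finite_subset)
  have Nbd: "Npois E t \<omega> \<le> n0" if "0 \<le> t" "t \<le> T + \<delta>" for t
    unfolding Npois_def using card_mono[OF _ sub[OF that(2)]] by simp
  have eq1: "ruin_time E U p x C \<omega> = Inf (ereal ` {t. 0 \<le> t \<and> x + p*t - (\<Sum>i<Npois E t \<omega>. U i \<omega>) - integral {0..t} (\<lambda>s. C s \<omega>) < 0})"
    by (simp add: ruin_time_def controlled_def surplus_def)
  have eq2: "ruin_time E U p x (\<lambda>t \<omega>. max (C t \<omega>) c) \<omega> = Inf (ereal ` {t. 0 \<le> t \<and> x + p*t - (\<Sum>i<Npois E t \<omega>. U i \<omega>) - integral {0..t} (\<lambda>s. max (C s \<omega>) c) < 0})"
    by (simp add: ruin_time_def controlled_def surplus_def)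
  have alt: "ereal T < ruin_time E U p x (\<lambda>t \<omega>. max (C t \<omega>) c) \<omega> \<or>
      ruin_time E U p x C \<omega> \<le> ruin_time E U p x (\<lambda>t \<omega>. max (C t \<omega>) c) \<omega> + ereal \<delta>"
    unfolding eq1 eq2
    by (rule pathwise[where Cp="\<lambda>t. C t \<omega>" and N="\<lambda>t. Npois E t \<omega>" and u="\<lambda>i. U i \<omega>",
          OF Cm _ pc dpos T Nmono Nbd ubig Sgap G xG]) (use Cb in auto)
  have le: "ruin_time E U p x (\<lambda>t \<omega>. max (C t \<omega>) c) \<omega> \<le> ruin_time E U p x C \<omega>"
    by (rule ruin_le[of C \<omega>, OF Cm])
  show ?thesis unfolding fJ_def
    by (rule loss[OF le alt T dpos q]) (use Cb p0 pc in \<open>auto intro: order_trans[of 0 p]\<close>)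
qed

lemma measure_bad:
  fixes x \<eta> \<eta>2 T' K :: real and n0 :: nat
  assumes cl: "cramer_lundberg M \<beta> p F E U" and K: "\<And>a b. a < b \<Longrightarrow> F b - F a \<le> K * (b - a)"
    and eta: "0 < \<eta>" "\<eta> \<le> \<eta>2" and T': "0 \<le> T'"
  defines "B \<equiv> {\<omega> \<in> space M. (\<exists>i. E i \<omega> \<le> 0) \<or> arrival E n0 \<omega> \<le> T' \<or> (\<exists>i<n0. U i \<omega> < \<eta>) \<or>
      (\<exists>n\<in>{1..n0}. x - \<eta>2 < (\<Sum>i<n. U i \<omega>) \<and> (\<Sum>i<n. U i \<omega>) \<le> x)}"
  shows "B \<in> sets M" "measure M B \<le> erlang_CDF n0 \<beta> T' + 2 * real n0 * K * \<eta>2"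
proof -
  interpret prob_space M by (rule cl_basic(1)[OF cl])
  note Em[measurable] = E_meas[OF cl] and Um[measurable] = cl_basic(5)[OF cl]
  define Z where "Z = (\<Union>i. {\<omega> \<in> space M. E i \<omega> \<le> 0})"
  define A0 where "A0 = {\<omega> \<in> space M. arrival E n0 \<omega> \<le> T'}"
  define A1 where "A1 = (\<Union>i\<in>{..<n0}. {\<omega> \<in> space M. U i \<omega> < \<eta>})"
  define A2 where "A2 = (\<Union>n\<in>{1..n0}. {\<omega> \<in> space M. x - \<eta>2 < (\<Sum>i<n. U i \<omega>) \<and> (\<Sum>i<n. U i \<omega>) \<le> x})"
  have Beq: "B = ((Z \<union> A0) \<union> A1) \<union> A2"
    unfolding B_def Z_def A0_def A1_def A2_def by auto
  have Zs: "Z \<in> events" unfolding Z_def by measurable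
  have A0s: "A0 \<in> events" unfolding A0_def arrival_def by measurable
  have A1s: "A1 \<in> events" unfolding A1_def by measurable
  have A2s: "A2 \<in> events" unfolding A2_def by measurable
  show "B \<in> sets M" unfolding Beq using Zs A0s A1s A2s by auto
  have Zn: "Z \<in> null_sets M" unfolding Z_def
  proof (rule null_sets_UN)
    fix i
    have "{\<omega> \<in> space M. E i \<omega> \<le> 0} \<in> events" by measurable
    moreover have "measure M {\<omega> \<in> space M. E i \<omega> \<le> 0} = 0" by (rule E_nonpos_null[OF cl])
    ultimately show "{\<omega> \<in> space M. E i \<omega> \<le> 0} \<in> null_sets M"
      by (simp add: null_sets_def emeasure_eq_measure)
  qed
  have mZ: "measure M Z = 0" using Zn by (simp add: measure_def null_setsD1)
  have mA0: "measure M A0 = erlang_CDF n0 \<beta> T'" unfolding A0_def by (rule arrival_prob[OF cl T'])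
  have mA1: "measure M A1 \<le> real n0 * (K * \<eta>2)"
  proof -
    have "measure M A1 \<le> (\<Sum>i\<in>{..<n0}. measure M {\<omega> \<in> space M. U i \<omega> < \<eta>})"
      unfolding A1_def by (rule finite_measure_subadditive_finite) auto
    also have "\<dots> \<le> (\<Sum>i\<in>{..<n0}. K * \<eta>2)"
    proof (rule sum_mono)
      fix i
      have "measure M {\<omega> \<in> space M. U i \<omega> < \<eta>} \<le> measure M {\<omega> \<in> space M. U i \<omega> \<le> \<eta>}"
        by (rule finite_measure_mono) auto
      also have "\<dots> = F \<eta>" by (rule cl_basic(6)[OF cl])
      also have "\<dots> = F \<eta> - F 0" by (simp add: F0[OF cl])
      also have "\<dots> \<le> K * \<eta>" using K[of 0 \<eta>] eta by simp
      also have "\<dots> \<le> K * \<eta>2"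
      proof -
        have "0 \<le> F \<eta> - F 0" using cl_basic(9)[OF cl] eta by blast
        then have "0 \<le> K * \<eta>" using K[of 0 \<eta>] eta by simp
        then have "0 \<le> K" using eta by (simp add: zero_le_mult_iff)
        then show ?thesis using eta by (intro mult_left_mono) auto
      qed
      finally show "measure M {\<omega> \<in> space M. U i \<omega> < \<eta>} \<le> K * \<eta>2" .
    qed
    finally show ?thesis by simp
  qed
  have mA2: "measure M A2 \<le> real n0 * (K * \<eta>2)"
  proof -
    have "measure M A2 \<le> (\<Sum>n\<in>{1..n0}. measure M {\<omega> \<in> space M. x - \<eta>2 < (\<Sum>i<n. U i \<omega>) \<and> (\<Sum>i<n. U i \<omega>) \<le> x})"
      unfolding A2_def by (rule finite_measure_subadditive_finite) auto
    also have "\<dots> \<le> (\<Sum>n\<in>{1..n0}. K * \<eta>2)"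
    proof (rule sum_mono)
      fix n assume "n \<in> {1..n0}"
      then obtain m where n: "n = Suc m" by (cases n) auto
      have lohi: "x - \<eta>2 < x" using eta by linarith
      have "measure M {\<omega> \<in> space M. x - \<eta>2 < (\<Sum>i<Suc m. U i \<omega>) \<and> (\<Sum>i<Suc m. U i \<omega>) \<le> x} \<le> K * (x - (x - \<eta>2))"
        using S_interval[OF cl K lohi] .
      then show "measure M {\<omega> \<in> space M. x - \<eta>2 < (\<Sum>i<n. U i \<omega>) \<and> (\<Sum>i<n. U i \<omega>) \<le> x} \<le> K * \<eta>2"
        by (simp add: n)
    qed
    finally show ?thesis by simp
  qed
  have "measure M B \<le> measure M (Z \<union> A0 \<union> A1) + measure M A2"
    unfolding Beq using Zs A0s A1s A2s by (intro measure_subadditive) (auto simp: emeasure_eq_measure)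
  also have "measure M (Z \<union> A0 \<union> A1) \<le> measure M (Z \<union> A0) + measure M A1"
    using Zs A0s A1s by (intro measure_subadditive) (auto simp: emeasure_eq_measure)
  also have "measure M (Z \<union> A0) \<le> measure M Z + measure M A0"
    using Zs A0s by (intro measure_subadditive) (auto simp: emeasure_eq_measure)
  finally show "measure M B \<le> erlang_CDF n0 \<beta> T' + 2 * real n0 * K * \<eta>2"
    using mZ mA0 mA1 mA2 by simp
qed

lemma core:
  assumes cl: "cramer_lundberg M \<beta> p F E U" and q: "0 < q" and pc: "p < cbar" and x: "0 < x" and e: "0 < \<epsilon>"
  shows "\<exists>d>0. \<forall>c. p < c \<and> c < p + d \<longrightarrow> c \<le> cbar \<and>
           (\<forall>C\<in>admissible M E U p cbar x p. Jval M E U p q x C \<le> Jval M E U p q x (\<lambda>t \<omega>. max (C t \<omega>) c) + \<epsilon>)"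
proof -
  interpret prob_space M by (rule cl_basic(1)[OF cl])
  have p0: "0 < p" by (rule cl_basic(3)[OF cl])
  have b0: "0 < \<beta>" by (rule cl_basic(2)[OF cl])
  have cb0: "0 < cbar" using p0 pc by simp
  obtain K0 where K0: "0 < K0" and Kp: "\<forall>a b. a < b \<longrightarrow> 0 \<le> F b - F a \<and> F b - F a \<le> K0 * (b - a)"
    using cl_basic(9)[OF cl] by blast
  have K: "\<And>a b. a < b \<Longrightarrow> F b - F a \<le> K0 * (b - a)" using Kp by blast
  define R where "R = \<epsilon> * q / (4 * cbar)"
  have R0: "0 < R" unfolding R_def using e q cb0 by simp
  define T where "T = \<bar>ln R\<bar> / q"
  have T0: "0 \<le> T" unfolding T_def using q by simp
  have expT: "exp (- q * T) \<le> R"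
  proof -
    have "- q * T = - \<bar>ln R\<bar>" unfolding T_def using q by simp
    then have "exp (- q * T) = exp (- \<bar>ln R\<bar>)" by simp
    also have "\<dots> \<le> exp (ln R)" by simp
    also have "\<dots> = R" using R0 by simp
    finally show ?thesis .
  qed
  define \<delta> where "\<delta> = \<epsilon> / (4 * cbar)"
  have d0: "0 < \<delta>" unfolding \<delta>_def using e cb0 by simp
  define L where "L = cbar * max (exp (- q * T) / q) \<delta>"
  have L4: "L \<le> \<epsilon> / 4"
  proof -
    have "exp (- q * T) / q \<le> R / q" using expT q by (simp add: divide_right_mono)
    also have "R / q = \<epsilon> / (4 * cbar)" unfolding R_def using q by simp
    finally have "max (exp (- q * T) / q) \<delta> \<le> \<epsilon> / (4 * cbar)" unfolding \<delta>_def by simp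
    then have "L \<le> cbar * (\<epsilon> / (4 * cbar))" unfolding L_def using cb0 by (intro mult_left_mono) auto
    also have "\<dots> = \<epsilon> / 4" using cb0 by simp
    finally show ?thesis .
  qed
  have L0: "0 \<le> L" unfolding L_def using cb0 d0 by simp
  define T' where "T' = T + \<delta>"
  have T'0: "0 \<le> T'" unfolding T'_def using T0 d0 by simp
  have "eventually (\<lambda>n. erlang_CDF n \<beta> T' < R) sequentially"
    using order_tendstoD(2)[OF erlang_CDF_lim[OF b0] R0] .
  then obtain n0 where n0: "erlang_CDF n0 \<beta> T' < R" unfolding eventually_sequentially by blast
  define G where "G = T' * (1 + 2 * T' / \<delta>)"
  have G0: "0 < G" "T' \<le> G"
  proof -
    have "0 < T'" unfolding T'_def using T0 d0 by simp
    moreover have "1 \<le> 1 + 2 * T' / \<delta>" using T'0 d0 by simp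
    ultimately show "0 < G" "T' \<le> G" unfolding G_def by (auto simp: mult_le_cancel_left1)
  qed
  define D where "D = 2 * (real n0 + 1) * K0 * G"
  have D0: "0 < D" unfolding D_def using K0 G0 by simp
  define d where "d = min (cbar - p) (min (x / G) (R / D))"
  have dpos: "0 < d" unfolding d_def using pc x G0 R0 D0 by simp
  have dle: "d \<le> cbar - p" "d \<le> x / G" "d \<le> R / D" unfolding d_def by auto
  show ?thesis
  proof (intro exI[of _ d] conjI allI impI ballI dpos)
    fix c assume c: "p < c \<and> c < p + d"
    then show "c \<le> cbar" using dle by linarith
    fix C assume C: "C \<in> admissible M E U p cbar x p"
    have Cm: "\<And>\<omega>. \<omega> \<in> space M \<Longrightarrow> mono_on {0..} (\<lambda>t. C t \<omega>)"
      using C unfolding adm_else[OF x] by simp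
    have Cb: "\<And>\<omega> t. \<omega> \<in> space M \<Longrightarrow> 0 \<le> t \<Longrightarrow> p \<le> C t \<omega> \<and> C t \<omega> \<le> cbar"
      using C unfolding adm_else[OF x] by simp
    define \<eta> where "\<eta> = (c - p) * T'"
    define \<eta>2 where "\<eta>2 = (c - p) * G"
    have eta: "0 < \<eta>" "\<eta> \<le> \<eta>2"
      unfolding \<eta>_def \<eta>2_def using c G0 T0 d0 by (auto simp: T'_def intro!: mult_left_mono)
    define B where "B = {\<omega> \<in> space M. (\<exists>i. E i \<omega> \<le> 0) \<or> arrival E n0 \<omega> \<le> T' \<or> (\<exists>i<n0. U i \<omega> < \<eta>) \<or>
      (\<exists>n\<in>{1..n0}. x - \<eta>2 < (\<Sum>i<n. U i \<omega>) \<and> (\<Sum>i<n. U i \<omega>) \<le> x)}"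
    have Bs: "B \<in> sets M" unfolding B_def by (rule measure_bad(1)[OF cl K eta T'0])
    have mB: "measure M B \<le> erlang_CDF n0 \<beta> T' + 2 * real n0 * K0 * \<eta>2"
      unfolding B_def by (rule measure_bad(2)[OF cl K eta T'0])
    have cpd: "c - p < R / D" using c dle by linarith
    have "2 * real n0 * K0 * \<eta>2 \<le> D * (c - p)"
      unfolding D_def \<eta>2_def using K0 G0 c by (simp add: mult_right_mono)
    also have "\<dots> < R" using cpd D0 by (simp add: field_simps)
    finally have mB2: "measure M B \<le> 2 * R" using mB n0 by simp
    have xG: "(c - p) * G \<le> x"
    proof -
      have "c - p < x / G" using c dle by linarith
      then show ?thesis using G0 by (simp add: field_simps)
    qed
    define C' where "C' = (\<lambda>t \<omega>. max (C t \<omega>) c)"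
    define k where "k \<omega> = ennreal L + ennreal (cbar / q) * indicator B \<omega>" for \<omega>
    have km: "k \<in> borel_measurable M" unfolding k_def using Bs by measurable
    have kfin: "k \<omega> < top" for \<omega> unfolding k_def by (simp add: ennreal_mult_less_top split: split_indicator)
    have pw: "fJ E U p q x C \<omega> \<le> fJ E U p q x C' \<omega> + k \<omega>" if om: "\<omega> \<in> space M" for \<omega>
    proof (cases "\<omega> \<in> B")
      case True
      have "fJ E U p q x C \<omega> \<le> ennreal (cbar / q)"
        by (rule fJ_bound[OF q _ less_imp_le[OF cb0]]) (use Cb[OF om] in blast)
      also have "\<dots> \<le> k \<omega>" using True by (simp add: k_def)
      also have "\<dots> \<le> fJ E U p q x C' \<omega> + k \<omega>" by simp
      finally show ?thesis .
    next
      case False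
      have Epos: "\<And>i. 0 < E i \<omega>" using False om unfolding B_def by (auto simp: not_le)
      have arr: "T + \<delta> < arrival E n0 \<omega>" using False om unfolding B_def T'_def by (auto simp: not_le)
      have ub0: "\<forall>i<n0. \<not> U i \<omega> < \<eta>" using False om unfolding B_def by auto
      have ubig: "\<And>i. i < n0 \<Longrightarrow> (c - p) * (T + \<delta>) \<le> U i \<omega>"
        using ub0 unfolding \<eta>_def T'_def by (auto simp: not_less)
      have Sgap: "\<And>n. 1 \<le> n \<Longrightarrow> n \<le> n0 \<Longrightarrow> \<not> (x - (c-p)*G < (\<Sum>i<n. U i \<omega>) \<and> (\<Sum>i<n. U i \<omega>) \<le> x)"
        using False om unfolding B_def \<eta>2_def by auto
      have "fJ E U p q x C \<omega> \<le> fJ E U p q x C' \<omega> + ennreal L"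
        unfolding C'_def L_def
        by (rule pointwise_good[where C=C and \<omega>=\<omega> and c=c and E=E and U=U and x=x and G=G and cbar=cbar and p=p and q=q and T=T and \<delta>=\<delta>,
             OF Cm[OF om] Cb[OF om] p0 _ d0 T0 q Epos arr ubig Sgap _ xG])
           (use c in \<open>auto simp: G_def T'_def\<close>)
      also have "\<dots> \<le> fJ E U p q x C' \<omega> + k \<omega>" by (simp add: k_def)
      finally show ?thesis .
    qed
    have "(\<integral>\<^sup>+\<omega>. fJ E U p q x C \<omega> \<partial>M) \<le> (\<integral>\<^sup>+\<omega>. fJ E U p q x C' \<omega> \<partial>M) + integral\<^sup>N M k"
      by (rule nn_integral_sub_add[OF km kfin pw])
    also have "integral\<^sup>N M k = ennreal (L + cbar / q * measure M B)"
    proof -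
      have m1: "(\<lambda>\<omega>. ennreal (cbar / q) * indicator B \<omega>) \<in> borel_measurable M"
        by (intro borel_measurable_times_ennreal borel_measurable_const borel_measurable_indicator Bs)
      have "integral\<^sup>N M k = (\<integral>\<^sup>+\<omega>. ennreal L \<partial>M) + (\<integral>\<^sup>+\<omega>. ennreal (cbar / q) * indicator B \<omega> \<partial>M)"
        unfolding k_def by (rule nn_integral_add[OF borel_measurable_const m1])
      also have "\<dots> = ennreal L + ennreal (cbar / q) * emeasure M B"
        by (simp only: nn_integral_const nn_integral_cmult_indicator[OF Bs] emeasure_space_1 mult_1_right)
      finally have "integral\<^sup>N M k = ennreal L + ennreal (cbar / q) * emeasure M B" .
      also have "\<dots> = ennreal L + ennreal (cbar / q * measure M B)"
        using ennreal_mult'[of "cbar / q" "measure M B"] cb0 q by (simp add: emeasure_eq_measure)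
      also have "\<dots> = ennreal (L + cbar / q * measure M B)"
        using L0 cb0 q by (simp add: measure_nonneg)
      finally show ?thesis .
    qed
    finally have I1: "(\<integral>\<^sup>+\<omega>. fJ E U p q x C \<omega> \<partial>M) \<le> (\<integral>\<^sup>+\<omega>. fJ E U p q x C' \<omega> \<partial>M) + ennreal (L + cbar / q * measure M B)" .
    have C'b: "\<And>\<omega> t. \<omega> \<in> space M \<Longrightarrow> 0 \<le> t \<Longrightarrow> C' t \<omega> \<le> cbar"
      unfolding C'_def using Cb c \<open>c \<le> cbar\<close> by auto
    have fin: "(\<integral>\<^sup>+\<omega>. fJ E U p q x C' \<omega> \<partial>M) \<le> ennreal (cbar / q)"
      by (rule Jval_bound(2)[OF cl_basic(1)[OF cl] q less_imp_le[OF cb0] C'b])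
    then have fin2: "(\<integral>\<^sup>+\<omega>. fJ E U p q x C' \<omega> \<partial>M) = ennreal (Jval M E U p q x C')"
      unfolding Jval_fJ by (intro ennreal_enn2real[symmetric] le_less_trans[OF _ ennreal_less_top])
    define r where "r = L + cbar / q * measure M B"
    have r0: "0 \<le> r" unfolding r_def using L0 cb0 q by (simp add: measure_nonneg)
    have "(\<integral>\<^sup>+\<omega>. fJ E U p q x C \<omega> \<partial>M) \<le> ennreal (Jval M E U p q x C') + ennreal r"
      using I1 fin2 unfolding r_def by simp
    also have "\<dots> = ennreal (Jval M E U p q x C' + r)"
      using r0 by (simp add: Jval_def)
    finally have "Jval M E U p q x C \<le> Jval M E U p q x C' + r"
      unfolding Jval_fJ[of M E U p q x C] by (rule enn2real_leI[rotated]) (use r0 in \<open>simp add: Jval_def\<close>)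
    then have "Jval M E U p q x C \<le> Jval M E U p q x C' + (L + cbar / q * measure M B)"
      unfolding r_def .
    also have "cbar / q * measure M B \<le> cbar / q * (2 * R)"
      using mB2 cb0 q by (intro mult_left_mono) auto
    also have "cbar / q * (2 * R) = \<epsilon> / 2" unfolding R_def using cb0 q by (simp add: field_simps)
    finally show "Jval M E U p q x C \<le> Jval M E U p q x (\<lambda>t \<omega>. max (C t \<omega>) c) + \<epsilon>"
      using L4 e unfolding C'_def by linarith
  qed
qed

theorem proposition3p4:
  fixes M :: "'a measure" and \<beta> p q cbar x :: real and F :: "real \<Rightarrow> real"
    and E U :: "nat \<Rightarrow> 'a \<Rightarrow> real"
  assumes "cramer_lundberg M \<beta> p F E U"
    and "0 < q" and "p < cbar" and "0 < x"
  shows "((\<lambda>c. Vval M E U p q cbar x c) \<longlongrightarrow> Vval M E U p q cbar x p) (at_right p)"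
proof -
  note cl = assms(1) and q = assms(2) and pc = assms(3) and x = assms(4)
  have pM: "prob_space M" by (rule cl_basic(1)[OF cl])
  have p0: "0 < p" by (rule cl_basic(3)[OF cl])
  have cb0: "0 \<le> cbar" using p0 pc by simp
  define V where "V c = Vval M E U p q cbar x c" for c
  have ne: "admissible M E U p cbar x c \<noteq> {}" if "p \<le> c" "c \<le> cbar" for c
    using const_adm[OF x order_refl that(2), of M E U p] by blast
  have bdd: "bdd_above (Jval M E U p q x ` admissible M E U p cbar x c)" if "p \<le> c" for c
  proof (rule bdd_aboveI2)
    fix C assume C: "C \<in> admissible M E U p cbar x c"
    have "\<And>\<omega> t. \<omega> \<in> space M \<Longrightarrow> 0 \<le> t \<Longrightarrow> C t \<omega> \<le> cbar"
      using C unfolding adm_else[OF x] by simp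
    then show "Jval M E U p q x C \<le> cbar / q" by (rule Jval_bound(1)[OF pM q cb0])
  qed
  have Vle: "V c \<le> V p" if "p < c" "c \<le> cbar" for c
    unfolding V_def Vval_def
    by (rule cSUP_subset_mono[OF ne[OF _ that(2)] bdd[OF order_refl] adm_mono[OF x]]) (use that in auto)
  have Vge: "\<exists>d>0. \<forall>c. p < c \<and> c < p + d \<longrightarrow> c \<le> cbar \<and> V p - e < V c" if e: "0 < e" for e
  proof -
    obtain d where d: "0 < d" and H: "\<forall>c. p < c \<and> c < p + d \<longrightarrow> c \<le> cbar \<and>
           (\<forall>C\<in>admissible M E U p cbar x p. Jval M E U p q x C \<le> Jval M E U p q x (\<lambda>t \<omega>. max (C t \<omega>) c) + e / 2)"
      using core[OF cl q pc x, of "e / 2"] e by auto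
    show ?thesis
    proof (intro exI[of _ d] conjI allI impI d)
      fix c assume c: "p < c \<and> c < p + d"
      then show cc: "c \<le> cbar" using H by blast
      have "V p - e / 2 < V p" using e by simp
      then obtain C where C: "C \<in> admissible M E U p cbar x p" and lt: "V p - e / 2 < Jval M E U p q x C"
        unfolding V_def Vval_def using less_cSUP_iff[OF ne[OF order_refl less_imp_le[OF pc]] bdd[OF order_refl]] by blast
      have "Jval M E U p q x C \<le> Jval M E U p q x (\<lambda>t \<omega>. max (C t \<omega>) c) + e / 2" using H c C by blast
      also have "Jval M E U p q x (\<lambda>t \<omega>. max (C t \<omega>) c) \<le> V c"
        unfolding V_def Vval_def
        by (rule cSUP_upper[OF max_adm[OF x C] bdd]) (use c cc in auto)
      finally show "V p - e < V c" using lt by simp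
    qed
  qed
  have "(V \<longlongrightarrow> V p) (at_right p)"
  proof (rule tendstoI)
    fix e :: real assume e: "0 < e"
    obtain d where d: "0 < d" and H: "\<forall>c. p < c \<and> c < p + d \<longrightarrow> c \<le> cbar \<and> V p - e < V c"
      using Vge[OF e] by blast
    have "eventually (\<lambda>c. c \<in> {p<..<p + d}) (at_right p)"
      using d by (intro eventually_at_right_real) simp
    then show "eventually (\<lambda>c. dist (V c) (V p) < e) (at_right p)"
    proof (rule eventually_mono)
      fix c assume "c \<in> {p<..<p + d}"
      then have c: "p < c \<and> c < p + d" by simp
      then have "c \<le> cbar" "V p - e < V c" using H by blast+
      moreover have "V c \<le> V p" using Vle c \<open>c \<le> cbar\<close> by blast
      ultimately show "dist (V c) (V p) < e" using e by (simp add: dist_real_def abs_if)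
    qed
  qed
  then show ?thesis unfolding V_def[abs_def] by simp
qed

end
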